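(* Let $\mathcal{G}=(\mathcal{N},\mathcal{E})$ be a finite rooted tree whose edges are directed from parent to child, and let each edge $e\in\mathcal{E}$ carry a strictly positive weight $w(e)>0$. Call a set of edges $\mathcal{E}'\subseteq\mathcal{E}$ a matching (feasible schedule) if no two distinct edges of $\mathcal{E}'$ share a common vertex, and call a matching a maximum weighted matching (MWM) of $\mathcal{G}$ if it maximizes $\sum_{e\in\mathcal{E}'} w(e)$ over all matchings of $\mathcal{G}$. Let $n_k$ be an arbitrary internal node of $\mathcal{G}$ (i.e., a node with at least one child), and let $\{n_j\}_k$ be the set of its children. Then every MWM of $\mathcal{G}$ contains an edge having as one of its endpoints either $n_k$ or some element of $\{n_j\}_k$.
   Context: The tree models an Integrated Access and Backhaul network in spanning-tree topology: nodes are the IAB-donor (root), IAB-nodes, and representative user nodes; each directed edge $e_{n_j\to n_k}$ goes from a parent node $n_j$ to its child $n_k$. The weight of an edge is the (positive) utility obtained when scheduling that link, and the utility of a set of scheduled links is the sum of their weights. *)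

theory Defs
  imports Complex_Main
begin

text \<open>A finite rooted tree on node set N with root r, given by a parent function
  par (meaningful on N - {r}); every node reaches the root by iterating par.\<close>
definition rooted_tree :: "'a set \<Rightarrow> 'a \<Rightarrow> ('a \<Rightarrow> 'a) \<Rightarrow> bool" where
  "rooted_tree N r par \<longleftrightarrow> finite N \<and> r \<in> N \<and>
     (\<forall>x \<in> N - {r}. par x \<in> N) \<and>
     (\<forall>x \<in> N. \<exists>n. (par ^^ n) x = r)"

definition tree_edges :: "'a set \<Rightarrow> 'a \<Rightarrow> ('a \<Rightarrow> 'a) \<Rightarrow> ('a \<times> 'a) set" where
  "tree_edges N r par = {(par x, x) | x. x \<in> N - {r}}"

definition children :: "'a set \<Rightarrow> 'a \<Rightarrow> ('a \<Rightarrow> 'a) \<Rightarrow> 'a \<Rightarrow> 'a set" where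
  "children N r par k = {j \<in> N - {r}. par j = k}"

definition endpoints :: "'a \<times> 'a \<Rightarrow> 'a set" where
  "endpoints e = {fst e, snd e}"

definition is_matching :: "('a \<times> 'a) set \<Rightarrow> ('a \<times> 'a) set \<Rightarrow> bool" where
  "is_matching E M \<longleftrightarrow> M \<subseteq> E \<and>
     (\<forall>e1 \<in> M. \<forall>e2 \<in> M. e1 \<noteq> e2 \<longrightarrow> endpoints e1 \<inter> endpoints e2 = {})"

definition is_MWM :: "('a \<times> 'a) set \<Rightarrow> ('a \<times> 'a \<Rightarrow> real) \<Rightarrow> ('a \<times> 'a) set \<Rightarrow> bool" where
  "is_MWM E w M \<longleftrightarrow> is_matching E M \<and>
     (\<forall>M'. is_matching E M' \<longrightarrow> sum w M' \<le> sum w M)"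

end

theory Submission
  imports Defs
begin

theorem lemma1:
  fixes N :: "'a set" and r :: 'a and par :: "'a \<Rightarrow> 'a"
    and w :: "'a \<times> 'a \<Rightarrow> real" and M :: "('a \<times> 'a) set" and k :: 'a
  assumes "rooted_tree N r par"
    and "\<forall>e \<in> tree_edges N r par. w e > 0"
    and "k \<in> N" and "children N r par k \<noteq> {}"
    and "is_MWM (tree_edges N r par) w M"
  shows "\<exists>e \<in> M. k \<in> endpoints e \<or> endpoints e \<inter> children N r par k \<noteq> {}"
proof (rule ccontr)
  assume H: "\<not> ?thesis"
  let ?E = "tree_edges N r par"
  obtain j where j: "j \<in> children N r par k" using assms(4) by blast
  have jN: "j \<in> N - {r}" and pj: "par j = k" using j by (auto simp: children_def)
  have eE: "(k, j) \<in> ?E" using jN pj unfolding tree_edges_def by force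
  have finE: "finite ?E"
  proof -
    have "?E = (\<lambda>x. (par x, x)) ` (N - {r})" unfolding tree_edges_def by blast
    moreover have "finite N" using assms(1) by (simp add: rooted_tree_def)
    ultimately show ?thesis by simp
  qed
  have mM: "is_matching ?E M" and opt: "\<forall>M'. is_matching ?E M' \<longrightarrow> sum w M' \<le> sum w M"
    using assms(5) by (auto simp: is_MWM_def)
  have MsubE: "M \<subseteq> ?E" using mM by (simp add: is_matching_def)
  have finM: "finite M" using finE MsubE finite_subset by blast
  have disj: "\<forall>e\<in>M. endpoints e \<inter> {k, j} = {}"
    using H j by (auto simp: endpoints_def)
  have notin: "(k, j) \<notin> M" using H by (auto simp: endpoints_def)
  have "is_matching ?E (insert (k, j) M)"
    using mM eE disj unfolding is_matching_def
    by (auto simp: endpoints_def Int_commute)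
  hence "sum w (insert (k, j) M) \<le> sum w M" using opt by blast
  moreover have "sum w (insert (k, j) M) = w (k, j) + sum w M"
    using finM notin by simp
  moreover have "w (k, j) > 0" using assms(2) eE by blast
  ultimately show False by simp
qed

end
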